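(* Let $m,\gamma\in\mathbb{N}$ with $2\gamma<m$, and let $$P_{m,\gamma}(x):=\frac{1}{\sqrt{\gamma}}\sum_{v=0}^{2^\gamma-1}\sum_{j=0}^{\gamma-1}w_{2^{m-\gamma}v+2^{m-2\gamma}(v\oplus 2^j)}(x).$$ Let $\lambda=\{\lambda_n\}_{n\ge1}$ be a nondecreasing sequence of integers with $1\le\lambda_n\le n$. Let $x\in[0,1)$ and let $\ell(x)$ be an integer with $\ell(x)\in[2^{m-\gamma},2^m)\cap 2^{m-2\gamma}\mathbb{N}$ and $|S_{\ell(x)}(P_{m,\gamma};x)|\ge\frac14\sqrt{\gamma}$ (such an integer exists for every $x$). If $\lambda_{\ell(x)}<2^{m-2\gamma}$, then $$V^{(\lambda)}_{\ell(x)}(P_{m,\gamma};x)=S_{\ell(x)}(P_{m,\gamma};x),$$ and in particular $|V^{(\lambda)}_{\ell(x)}(P_{m,\gamma};x)|\ge\frac14\sqrt{\gamma}$.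
   Context: For nonnegative integers $n=\sum_j n_j2^j$, $m=\sum_j m_j2^j$ (binary expansions), $n\oplus m:=\sum_{j\ge0}|n_j-m_j|2^j$. Rademacher functions: $r_j(x):=(-1)^{\lfloor 2^{j+1}x\rfloor}$ on $[0,1)$; Walsh--Paley functions: $w_n(x):=\prod_{j\ge0}r_j(x)^{n_j}$. For $f\in L^1([0,1))$, $\widehat f(n):=\int_0^1 f w_n$, $S_n(f;x):=\sum_{k=0}^{n-1}\widehat f(k)w_k(x)$ (so $S_0=0$), and the de la Vallée Poussin means are $V_n^{(\lambda)}(f;x):=\frac{1}{\lambda_n+1}\sum_{k=n-\lambda_n}^{n}S_k(f;x)$. $2^s\mathbb{N}$ denotes the positive integer multiples of $2^s$. *)

theory Defs
  imports "HOL-Analysis.Analysis"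
begin

definition rademacher :: "nat \<Rightarrow> real \<Rightarrow> real" where
  "rademacher j x = (-1) powi \<lfloor>2 ^ (j + 1) * x\<rfloor>"

definition bdigit :: "nat \<Rightarrow> nat \<Rightarrow> nat" where
  "bdigit n j = (n div 2 ^ j) mod 2"

text \<open>Walsh--Paley functions: product over all j of r_j^{n_j}; digits vanish for j \<ge> n.\<close>
definition walsh :: "nat \<Rightarrow> real \<Rightarrow> real" where
  "walsh n x = (\<Prod>j<n. rademacher j x ^ bdigit n j)"

definition dyadic_add :: "nat \<Rightarrow> nat \<Rightarrow> nat" where
  "dyadic_add n m = (\<Sum>j<n + m. nat \<bar>int (bdigit n j) - int (bdigit m j)\<bar> * 2 ^ j)"

definition walsh_coeff :: "(real \<Rightarrow> real) \<Rightarrow> nat \<Rightarrow> real" where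
  "walsh_coeff f n = (LINT t:{0..<1}|lborel. f t * walsh n t)"

definition walsh_partial_sum :: "nat \<Rightarrow> (real \<Rightarrow> real) \<Rightarrow> real \<Rightarrow> real" where
  "walsh_partial_sum n f x = (\<Sum>k<n. walsh_coeff f k * walsh k x)"

definition vallee_poussin :: "(nat \<Rightarrow> nat) \<Rightarrow> nat \<Rightarrow> (real \<Rightarrow> real) \<Rightarrow> real \<Rightarrow> real" where
  "vallee_poussin lam n f x =
     (1 / (real (lam n) + 1)) * (\<Sum>k = n - lam n .. n. walsh_partial_sum k f x)"

definition P_poly :: "nat \<Rightarrow> nat \<Rightarrow> real \<Rightarrow> real" where
  "P_poly m \<gamma> x = (1 / sqrt (real \<gamma>)) *
     (\<Sum>v<2 ^ \<gamma>. \<Sum>j<\<gamma>.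
        walsh (2 ^ (m - \<gamma>) * v + 2 ^ (m - 2 * \<gamma>) * dyadic_add v (2 ^ j)) x)"

end

theory Submission
  imports Defs
begin

lemma neg1_powi: "(-1::real) powi k = (if even k then 1 else -1)"
proof (cases "k \<ge> 0")
  case True
  then have "k = int (nat k)" by simp
  then obtain n where "k = int n" by blast
  then show ?thesis by (simp add: power_int_of_nat)
next
  case False
  then have "k = - int (nat (-k))" by simp
  then obtain n where "k = - int n" by blast
  then show ?thesis by (simp add: power_int_minus_one_minus power_int_of_nat)
qed

lemma rad_if: "rademacher j x = (if even \<lfloor>2 ^ (j + 1) * x\<rfloor> then 1 else -1)"
  unfolding rademacher_def neg1_powi ..

lemma rad_meas[measurable]: "rademacher j \<in> borel_measurable borel"
proof -
  have "(\<lambda>x. (\<lambda>i::int. \<lambda>x. if even i then 1 else (-1::real)) (\<lfloor>(2::real) ^ (j + 1) * x\<rfloor>) x) \<in> borel_measurable borel"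
    by (rule measurable_compose_countable) measurable
  then show ?thesis by (simp add: rad_if[abs_def])
qed

lemma walsh_meas[measurable]: "walsh n \<in> borel_measurable borel"
  unfolding walsh_def[abs_def] by measurable

lemma rad_sq: "rademacher j x ^ 2 = 1"
  by (simp add: rad_if)

lemma rad_abs: "\<bar>rademacher j x\<bar> = 1"
  by (simp add: rad_if)

lemma walsh_abs: "\<bar>walsh n x\<bar> = 1"
  unfolding walsh_def by (simp add: abs_prod power_abs rad_abs)

lemma rad_period: "rademacher j (x + 1) = rademacher j x"
proof -
  have "(2::real) ^ (j + 1) * (x + 1) = 2 ^ (j + 1) * x + of_int (2 * 2 ^ j)"
    by (simp add: algebra_simps)
  then have "\<lfloor>(2::real) ^ (j + 1) * (x + 1)\<rfloor> = \<lfloor>2 ^ (j + 1) * x\<rfloor> + 2 * 2 ^ j"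
    by (metis floor_add_int)
  then show ?thesis by (simp add: rad_if)
qed

lemma rad_shift_hi:
  assumes "J < j"
  shows "rademacher j (x + 1 / 2 ^ (J+1)) = rademacher j x"
proof -
  have e: "(2::real) ^ (j + 1) * (1 / 2 ^ (J+1)) = 2 * 2 ^ (j - J - 1)"
    using assms by (simp add: power_diff[symmetric] field_simps flip: power_add power_Suc)
  have "(2::real) ^ (j + 1) * (x + 1 / 2 ^ (J+1)) = 2 ^ (j + 1) * x + of_int (2 * 2 ^ (j - J - 1))"
    by (simp only: distrib_left e) simp
  then have "\<lfloor>(2::real) ^ (j + 1) * (x + 1 / 2 ^ (J+1))\<rfloor> = \<lfloor>2 ^ (j + 1) * x\<rfloor> + 2 * 2 ^ (j - J - 1)"
    by (metis floor_add_int)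
  then show ?thesis by (simp add: rad_if)
qed

lemma rad_shift_eq:
  shows "rademacher J (x + 1 / 2 ^ (J+1)) = - rademacher J x"
proof -
  have "\<lfloor>2 ^ (J + 1) * (x + 1 / 2 ^ (J+1))\<rfloor> = \<lfloor>2 ^ (J + 1) * x\<rfloor> + 1"
    by (simp add: distrib_left)
  then show ?thesis by (simp add: rad_if)
qed

lemma antiperiodic_int_zero:
  fixes f :: "real \<Rightarrow> real"
  assumes meas[measurable]: "f \<in> borel_measurable borel"
    and bnd: "\<And>x. \<bar>f x\<bar> \<le> 1"
    and per: "\<And>x. f (x + 1) = f x"
    and anti: "\<And>x. f (x + h) = - f x"
    and h: "0 < h" "h \<le> 1"
  shows "(LINT x:{0..<1}|lborel. f x) = 0"
proof -
  have si: "set_integrable lborel S f" if "S \<in> sets lborel" "emeasure lborel S < \<infinity>" for S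
    unfolding set_integrable_def
    by (rule integrableI_bounded_set_indicator[where B=1]) (use that bnd in auto)
  have sI: "set_integrable lborel {a..b} f" for a b
    by (rule si) (auto simp: emeasure_lborel_Icc_eq)
  have io: "f integrable_on {a..b}" for a b
    using set_borel_integral_eq_integral(1)[OF sI] .
  have "(LINT x:{0..<1}|lborel. f x) = (LINT x:{0..1}|lborel. f x)"
  proof (rule set_integral_cong_set[symmetric])
    show "set_borel_measurable lborel {0..<1} f" "set_borel_measurable lborel {0..1} f"
      unfolding set_borel_measurable_def by measurable
    show "AE x in lborel. ((x::real) \<in> {0..<1}) = (x \<in> {0..1})"
      using AE_lborel_singleton[of 1] by eventually_elim auto
  qed
  also have "\<dots> = integral {0..1} f"
    using set_borel_integral_eq_integral(2)[OF sI] .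
  finally have eq: "(LINT x:{0..<1}|lborel. f x) = integral {0..1} f" .
  define I where "I = integral {0..1} f"
  have "integral {h-h..1+h-h} (\<lambda>x. f (x + h)) = integral {h..1+h} f"
    by (rule integral_shift_real_ivl)
  then have "integral {0..1} (\<lambda>x. - f x) = integral {h..1+h} f"
    by (simp add: anti)
  then have A: "- I = integral {h..1+h} f"
    by (simp add: I_def integral_neg)
  have B: "integral {h..1} f + integral {1..1+h} f = integral {h..1+h} f"
    by (rule Henstock_Kurzweil_Integration.integral_combine) (use h io in auto)
  have "integral {1-1..1+h-1} (\<lambda>x. f (x + 1)) = integral {1..1+h} f"
    by (rule integral_shift_real_ivl)
  then have C: "integral {0..h} f = integral {1..1+h} f"
    by (simp add: per)
  have D: "integral {0..h} f + integral {h..1} f = I"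
    unfolding I_def by (rule Henstock_Kurzweil_Integration.integral_combine) (use h io in auto)
  have "I = 0" using A B C D by linarith
  then show ?thesis using eq I_def by simp
qed

lemma bdigit_zero: "n \<le> j \<Longrightarrow> bdigit n j = 0"
proof -
  assume "n \<le> j"
  then have "n < 2 ^ j" using less_exp[of j] by linarith
  then show "bdigit n j = 0" by (simp add: bdigit_def)
qed

lemma bdigit_le1: "bdigit n j = 0 \<or> bdigit n j = 1"
  unfolding bdigit_def by presburger

lemma walsh_ext: "n \<le> N \<Longrightarrow> walsh n x = (\<Prod>j<N. rademacher j x ^ bdigit n j)"
  unfolding walsh_def
  by (rule prod.mono_neutral_left) (auto simp: bdigit_zero)

lemma digit_diff:
  assumes "n \<noteq> k"
  shows "\<exists>j. bdigit n j \<noteq> bdigit k j"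
proof (rule ccontr)
  assume "\<not> ?thesis"
  then have "\<forall>j. bdigit n j = bdigit k j" by blast
  then have "\<forall>j. bit n j = bit k j"
    by (simp add: bit_iff_odd bdigit_def odd_iff_mod_2_eq_one)
  then have "n = k" by (simp add: bit_eq_iff)
  with assms show False by simp
qed

lemma walsh_orth:
  assumes "n \<noteq> k"
  shows "(LINT t:{0..<1}|lborel. walsh n t * walsh k t) = 0"
proof -
  define N where "N = n + k"
  define e where "e j = bdigit n j + bdigit k j" for j
  define J where "J = (LEAST j. bdigit n j \<noteq> bdigit k j)"
  have dJ: "bdigit n J \<noteq> bdigit k J"
    unfolding J_def by (rule LeastI_ex[OF digit_diff[OF assms]])
  have lt: "bdigit n j = bdigit k j" if "j < J" for j
    using that unfolding J_def using not_less_Least by blast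
  have JN: "J < N"
  proof (rule ccontr)
    assume "\<not> J < N"
    then have "n \<le> J" "k \<le> J" by (auto simp: N_def)
    then show False using dJ by (simp add: bdigit_zero)
  qed
  have eJ: "e J = 1" using dJ bdigit_le1[of n J] bdigit_le1[of k J] by (auto simp: e_def)
  define F where "F t = (\<Prod>j<N. rademacher j t ^ e j)" for t
  have WF: "walsh n t * walsh k t = F t" for t
    unfolding F_def e_def walsh_ext[of n N, OF le_add1[of n k, folded N_def]]
      walsh_ext[of k N, OF le_add2[of k n, folded N_def]]
    by (simp add: power_add prod.distrib)
  define h :: real where "h = 1 / 2 ^ (J+1)"
  have step: "rademacher j (t + h) ^ e j = (if j = J then -1 else 1) * rademacher j t ^ e j" for j t
  proof (cases "j < J")
    case True
    then have "e j = 2 * bdigit n j" using lt by (simp add: e_def)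
    then show ?thesis using True by (simp add: power_mult rad_sq)
  next
    case False
    show ?thesis
    proof (cases "j = J")
      case True
      then show ?thesis using rad_shift_eq[of J t] by (simp add: eJ h_def)
    next
      case False2: False
      then have "J < j" using False by simp
      then show ?thesis using False2 rad_shift_hi[of J j t] by (simp add: h_def)
    qed
  qed
  have anti: "F (t + h) = - F t" for t
  proof -
    have "F (t + h) = (\<Prod>j<N. (if j = J then -1 else 1)) * F t"
      unfolding F_def by (simp add: step prod.distrib)
    also have "(\<Prod>j<N. (if j = J then -1 else (1::real))) = -1"
      using JN by (simp add: prod.delta)
    finally show ?thesis by simp
  qed
  have per: "F (t + 1) = F t" for t
    unfolding F_def by (simp add: rad_period)
  have bnd: "\<bar>F t\<bar> \<le> 1" for t
    unfolding WF[symmetric] by (simp add: abs_mult walsh_abs)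
  have meas: "F \<in> borel_measurable borel"
    unfolding F_def[abs_def] by measurable
  have hpos: "0 < h" "h \<le> 1" using one_le_power[of "2::real" "J+1"] by (auto simp: h_def)
  show ?thesis
    unfolding WF using antiperiodic_int_zero[OF meas bnd per anti hpos] .
qed

lemma walsh_prod_si: "set_integrable lborel {0..<1} (\<lambda>t. walsh a t * walsh b t)"
  unfolding set_integrable_def
  by (rule integrableI_bounded_set_indicator[where B=1]) (auto simp: abs_mult walsh_abs)

lemma coeff_zero:
  assumes "2 * \<gamma> < m" and nd: "\<not> 2 ^ (m - 2 * \<gamma>) dvd k"
  shows "walsh_coeff (P_poly m \<gamma>) k = 0"
proof -
  define c where "c = 1 / sqrt (real \<gamma>)"
  define idx where "idx v j = 2 ^ (m - \<gamma>) * v + 2 ^ (m - 2 * \<gamma>) * dyadic_add v (2 ^ j)" for v j :: nat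
  have dv: "2 ^ (m - 2 * \<gamma>) dvd idx v j" for v j
  proof -
    have "(2::nat) ^ (m - \<gamma>) = 2 ^ (m - 2 * \<gamma>) * 2 ^ \<gamma>"
      using assms(1) by (simp flip: power_add)
    then show ?thesis unfolding idx_def by simp
  qed
  have ne: "idx v j \<noteq> k" for v j using dv nd by metis
  have "walsh_coeff (P_poly m \<gamma>) k =
      (LINT t:{0..<1}|lborel. c * (\<Sum>v<2 ^ \<gamma>. \<Sum>j<\<gamma>. walsh (idx v j) t * walsh k t))"
    unfolding walsh_coeff_def P_poly_def c_def idx_def
    by (simp add: sum_distrib_right mult.assoc)
  also have "\<dots> = c * (LINT t:{0..<1}|lborel. (\<Sum>v<2 ^ \<gamma>. \<Sum>j<\<gamma>. walsh (idx v j) t * walsh k t))"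
    by simp
  also have "(LINT t:{0..<1}|lborel. (\<Sum>v<2 ^ \<gamma>. \<Sum>j<\<gamma>. walsh (idx v j) t * walsh k t))
      = (\<Sum>v<2 ^ \<gamma>. \<Sum>j<\<gamma>. LINT t:{0..<1}|lborel. walsh (idx v j) t * walsh k t)"
  proof -
    have I: "integrable lborel (\<lambda>t. indicator {0..<1} t *\<^sub>R (walsh (idx v j) t * walsh k t))" for v j
      using walsh_prod_si unfolding set_integrable_def .
    have "(LINT t:{0..<1}|lborel. (\<Sum>v<2 ^ \<gamma>. \<Sum>j<\<gamma>. walsh (idx v j) t * walsh k t))
      = integral\<^sup>L lborel (\<lambda>t. \<Sum>v<2 ^ \<gamma>. \<Sum>j<\<gamma>. indicator {0..<1} t *\<^sub>R (walsh (idx v j) t * walsh k t))"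
      unfolding set_lebesgue_integral_def by (simp only: scaleR_sum_right)
    also have "\<dots> = (\<Sum>v<2 ^ \<gamma>. integral\<^sup>L lborel (\<lambda>t. \<Sum>j<\<gamma>. indicator {0..<1} t *\<^sub>R (walsh (idx v j) t * walsh k t)))"
      by (rule Bochner_Integration.integral_sum[where I="{..<2 ^ \<gamma>}" and f="\<lambda>v t. \<Sum>j<\<gamma>. indicator {0..<1} t *\<^sub>R (walsh (idx v j) t * walsh k t)"])
        (rule Bochner_Integration.integrable_sum, rule I)
    also have "\<dots> = (\<Sum>v<2 ^ \<gamma>. \<Sum>j<\<gamma>. integral\<^sup>L lborel (\<lambda>t. indicator {0..<1} t *\<^sub>R (walsh (idx v j) t * walsh k t)))"
      by (intro sum.cong refl Bochner_Integration.integral_sum[where I="{..<\<gamma>}" and f="\<lambda>j t. indicator {0..<1} t *\<^sub>R (walsh (idx v j) t * walsh k t)" for v] I)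
    finally show ?thesis unfolding set_lebesgue_integral_def .
  qed
  also have "\<dots> = 0"
    using walsh_orth[OF ne] by simp
  finally show ?thesis by simp
qed

lemma dvd_gap:
  fixes M i l :: nat
  assumes "M dvd i" "M dvd l" "i < l"
  shows "i + M \<le> l"
proof -
  obtain p q where "i = M * p" "l = M * q" using assms by (auto elim!: dvdE)
  with assms(3) have "p < q" by (metis mult_less_cancel1)
  then have "p + 1 \<le> q" by simp
  then have "M * (p + 1) \<le> M * q" by (rule mult_le_mono2)
  then show ?thesis using \<open>i = M * p\<close> \<open>l = M * q\<close> by (simp add: algebra_simps)
qed

theorem corollary2p2:
  fixes m \<gamma> :: nat and lam :: "nat \<Rightarrow> nat" and x :: real and l :: nat
  assumes "2 * \<gamma> < m"
    and lam_bounds: "\<forall>n\<ge>1. 1 \<le> lam n \<and> lam n \<le> n"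
    and lam_mono: "\<forall>n\<ge>1. lam n \<le> lam (Suc n)"
    and "x \<in> {0..<1}"
    and "2 ^ (m - \<gamma>) \<le> l" and "l < 2 ^ m" and "2 ^ (m - 2 * \<gamma>) dvd l"
    and "\<bar>walsh_partial_sum l (P_poly m \<gamma>) x\<bar> \<ge> sqrt (real \<gamma>) / 4"
    and "lam l < 2 ^ (m - 2 * \<gamma>)"
  shows "vallee_poussin lam l (P_poly m \<gamma>) x = walsh_partial_sum l (P_poly m \<gamma>) x
         \<and> \<bar>vallee_poussin lam l (P_poly m \<gamma>) x\<bar> \<ge> sqrt (real \<gamma>) / 4"
proof -
  define M :: nat where "M = 2 ^ (m - 2 * \<gamma>)"
  have l1: "1 \<le> l" using assms(5) one_le_power[of "2::nat" "m - \<gamma>"] by linarith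
  have laml: "lam l \<le> l" using lam_bounds l1 by blast
  have Ml: "M \<le> l"
    using assms(5) power_increasing[of "m - 2 * \<gamma>" "m - \<gamma>" "2::nat"] unfolding M_def by linarith
  have lamM: "lam l < M" using assms(9) by (simp add: M_def)
  have Seq: "walsh_partial_sum k (P_poly m \<gamma>) x = walsh_partial_sum l (P_poly m \<gamma>) x"
    if k: "l - lam l \<le> k" "k \<le> l" for k
  proof -
    have z: "walsh_coeff (P_poly m \<gamma>) i = 0" if "i \<in> {k..<l}" for i
    proof (rule coeff_zero[OF assms(1)])
      show "\<not> 2 ^ (m - 2 * \<gamma>) dvd i"
      proof
        assume "2 ^ (m - 2 * \<gamma>) dvd i"
        then have "i + M \<le> l" using dvd_gap[of M i l] assms(7) that by (simp add: M_def)
        then show False using that k lamM laml by auto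
      qed
    qed
    have "(\<Sum>i<l. walsh_coeff (P_poly m \<gamma>) i * walsh i x)
        = (\<Sum>i<k. walsh_coeff (P_poly m \<gamma>) i * walsh i x) + (\<Sum>i=k..<l. walsh_coeff (P_poly m \<gamma>) i * walsh i x)"
      using k(2) sum.atLeastLessThan_concat[of 0 k l "\<lambda>i. walsh_coeff (P_poly m \<gamma>) i * walsh i x"]
      by (simp add: lessThan_atLeast0)
    also have "(\<Sum>i=k..<l. walsh_coeff (P_poly m \<gamma>) i * walsh i x) = 0"
      using z by simp
    finally show ?thesis unfolding walsh_partial_sum_def by simp
  qed
  have "vallee_poussin lam l (P_poly m \<gamma>) x
      = (1 / (real (lam l) + 1)) * (\<Sum>k = l - lam l .. l. walsh_partial_sum l (P_poly m \<gamma>) x)"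
  proof -
    have "(\<Sum>k = l - lam l .. l. walsh_partial_sum k (P_poly m \<gamma>) x)
        = (\<Sum>k = l - lam l .. l. walsh_partial_sum l (P_poly m \<gamma>) x)"
      by (rule sum.cong[OF refl], rule Seq) auto
    then show ?thesis unfolding vallee_poussin_def by simp
  qed
  also have "\<dots> = walsh_partial_sum l (P_poly m \<gamma>) x"
  proof -
    have "card {l - lam l .. l} = lam l + 1" using laml by simp
    then show ?thesis by (simp add: field_simps)
  qed
  finally show ?thesis using assms(8) by simp
qed

end
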